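(* For all integers $m,n\ge0$: (1) $\displaystyle \mathrm B_{m+n}(x)=\sum_{j=0}^m\sum_{k=0}^n x^{m+n-j-k}j^{n-k}\binom nk S(m,j)\,\mathrm B_k(x)$; (2) $\displaystyle \mathrm B^{\mathrm B}_{m+n}(x)=\sum_{j=0}^m\sum_{k=0}^n x^{m+n-j-k}(2j+1)^{n-k}\binom nk S^{\mathrm B}(m,j)\,\mathrm B_k(2x)$, with the convention $0^0=1$.
   Context: A set partition of a finite set $\mathcal X\subset\mathbb Z$ is a set of nonempty pairwise disjoint sets (blocks) with union $\mathcal X$. A pair $(i,j)$ is an arc of $\Lambda$ if $i<j$ lie in the same block and $j$ is the least element of that block greater than $i$; $\mathrm{Arc}(\Lambda)$ is the set of arcs. $\Pi(n)$ is the set of partitions of $[n]=\{1,\dots,n\}$ ($\Pi(0)$ contains only the empty partition) and $\mathrm B_n(x)=\sum_{\Lambda\in\Pi(n)}x^{|\mathrm{Arc}(\Lambda)|}$. $S(m,j)$ is the number of partitions of $[m]$ into $j$ blocks (Stirling number of the second kind, $S(0,j)=1$ if $j=0$ and $0$ otherwise). With $[\pm n]=\{\pm1,\dots,\pm n\}$, $\Pi^{\mathrm B}(n)$ is the set of partitions $\Lambda$ of $\{0\}\cup[\pm n]$ such that $(i,j)\in\mathrm{Arc}(\Lambda)$ iff $(-j,-i)\in\mathrm{Arc}(\Lambda)$; $S^{\mathrm B}(m,j)$ is the number of elements of $\Pi^{\mathrm B}(m)$ with $2j+1$ blocks; and $\mathrm B^{\mathrm B}_n(x)=\sum_{\Lambda\in\Pi^{\mathrm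 B}(n)}x^{|\mathrm{Arc}(\Lambda)|/2}$.
   Formalization: $\Pi^{\mathrm B}(n)$ admits only partitions in which every block equal to its own negative contains 0, which also restricts the partitions counted by $S^{\mathrm B}(m,j)$ and summed in $\mathrm B^{\mathrm B}_n(x)$. The paper assumes this as well. *)

theory Defs
  imports Main "HOL-Library.Disjoint_Sets" "HOL-Combinatorics.Stirling"
begin

definition arcs :: "int set set \<Rightarrow> (int \<times> int) set" where
  "arcs P = {(i, j). \<exists>B\<in>P. i \<in> B \<and> j \<in> B \<and> i < j \<and> (\<forall>k\<in>B. i < k \<longrightarrow> j \<le> k)}"

definition PiA :: "nat \<Rightarrow> int set set set" where
  "PiA n = {P. partition_on {1..int n} P}"

definition bellA :: "nat \<Rightarrow> 'a::comm_ring_1 \<Rightarrow> 'a" where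
  "bellA n x = (\<Sum>P\<in>PiA n. x ^ card (arcs P))"

text \<open>Type B partitions of {0} \<union> [+-n]: arc set symmetric under (i,j) -> (-j,-i);
  moreover (standard type-B convention) the only block equal to its
  own negative is the block containing 0.\<close>
definition PiB :: "nat \<Rightarrow> int set set set" where
  "PiB n = {P. partition_on ({0} \<union> {1..int n} \<union> {- int n..-1}) P
              \<and> (\<forall>i j. (i, j) \<in> arcs P \<longleftrightarrow> (-j, -i) \<in> arcs P)
              \<and> (\<forall>B\<in>P. uminus ` B = B \<longrightarrow> 0 \<in> B)}"

definition StirlingB :: "nat \<Rightarrow> nat \<Rightarrow> nat" where
  "StirlingB m j = card {P\<in>PiB m. card P = 2 * j + 1}"

definition bellB :: "nat \<Rightarrow> 'a::comm_ring_1 \<Rightarrow> 'a" where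
  "bellB n x = (\<Sum>P\<in>PiB n. x ^ (card (arcs P) div 2))"

end

theory Submission
  imports Defs
begin

lemma pascal_sum:
  fixes a :: "nat \<Rightarrow> 'a::comm_ring_1"
  shows "(\<Sum>k\<le>Suc n. of_nat (Suc n choose k) * a k) = (\<Sum>k\<le>n. of_nat (n choose k) * (a k + a (Suc k)))"
proof -
  have "(\<Sum>k\<le>Suc n. of_nat (Suc n choose k) * a k) = a 0 + (\<Sum>k\<le>n. of_nat (Suc n choose Suc k) * a (Suc k))"
    by (simp only: sum.atMost_Suc_shift) simp
  also have "\<dots> = a 0 + (\<Sum>k\<le>n. of_nat (n choose k) * a (Suc k)) + (\<Sum>k\<le>n. of_nat (n choose Suc k) * a (Suc k))"
    by (simp add: sum.distrib algebra_simps)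
  also have "a 0 + (\<Sum>k\<le>n. of_nat (n choose Suc k) * a (Suc k)) = (\<Sum>k\<le>n. of_nat (n choose k) * a k)"
  proof -
    have "(\<Sum>k\<le>n. of_nat (n choose k) * a k) = a 0 + (\<Sum>k<n. of_nat (n choose Suc k) * a (Suc k))"
    proof (cases n)
      case 0 then show ?thesis by simp
    next
      case (Suc n') then show ?thesis
        unfolding Suc sum.atMost_Suc_shift lessThan_Suc_atMost by simp
    qed
    also have "(\<Sum>k<n. of_nat (n choose Suc k) * a (Suc k)) = (\<Sum>k\<le>n. of_nat (n choose Suc k) * a (Suc k))"
      by (simp add: lessThan_Suc_atMost[symmetric] binomial_eq_0)
    finally show ?thesis by simp
  qed
  ultimately show ?thesis by (simp add: sum.distrib algebra_simps)
qed

definition Rc :: "(nat \<Rightarrow> 'a::comm_ring_1) \<Rightarrow> (nat \<Rightarrow> 'a) \<Rightarrow> (nat \<Rightarrow> nat \<Rightarrow> 'a) \<Rightarrow> nat \<Rightarrow> nat \<Rightarrow> 'a" where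
  "Rc e u v n i = (\<Sum>k\<le>n. of_nat (n choose k) * (\<Sum>j\<le>i. e j ^ (n - k) * u j * v k (i - j)))"

lemma Rc_step:
  fixes u e f h :: "nat \<Rightarrow> 'a::comm_ring_1" and v :: "nat \<Rightarrow> nat \<Rightarrow> 'a"
  assumes v0: "\<And>k. v (Suc k) 0 = f 0 * v k 0"
      and vS: "\<And>k l. v (Suc k) (Suc l) = f (Suc l) * v k (Suc l) + v k l"
      and eh: "\<And>j l. e j + f l = h (j + l)"
  shows "Rc e u v (Suc n) 0 = h 0 * Rc e u v n 0"
    and "Rc e u v (Suc n) (Suc i) = h (Suc i) * Rc e u v n (Suc i) + Rc e u v n i"
proof -
  define T where "T = (\<lambda>n k i. (\<Sum>j\<le>i. e j ^ (n - k) * u j * v k (i - j)))"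
  have R: "Rc e u v n i = (\<Sum>k\<le>n. of_nat (n choose k) * T n k i)" for n i
    by (simp add: Rc_def T_def)
  have key: "T (Suc n) k i + T (Suc n) (Suc k) i = (\<Sum>j\<le>i. e j ^ (n - k) * u j * (e j * v k (i - j) + v (Suc k) (i - j)))"
    if "k \<le> n" for k i
    using that by (simp add: T_def Suc_diff_le sum.distrib[symmetric] algebra_simps)
  have RS: "Rc e u v (Suc n) i = (\<Sum>k\<le>n. of_nat (n choose k) * (T (Suc n) k i + T (Suc n) (Suc k) i))" for i
  proof -
    have "Rc e u v (Suc n) i = (\<Sum>k\<le>Suc n. of_nat (Suc n choose k) * T (Suc n) k i)" by (rule R)
    also have "\<dots> = (\<Sum>k\<le>n. of_nat (n choose k) * (T (Suc n) k i + T (Suc n) (Suc k) i))"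
      by (rule pascal_sum[where a="\<lambda>k. T (Suc n) k i" and n=n])
    finally show ?thesis .
  qed
  show "Rc e u v (Suc n) 0 = h 0 * Rc e u v n 0"
  proof -
    have "Rc e u v (Suc n) 0 = (\<Sum>k\<le>n. of_nat (n choose k) * (T (Suc n) k 0 + T (Suc n) (Suc k) 0))"
      by (rule RS)
    also have "\<dots> = (\<Sum>k\<le>n. of_nat (n choose k) * (h 0 * T n k 0))"
    proof (rule sum.cong[OF refl])
      fix k assume "k \<in> {..n}"
      then have "T (Suc n) k 0 + T (Suc n) (Suc k) 0 = e 0 ^ (n - k) * u 0 * (e 0 * v k 0 + f 0 * v k 0)"
        by (simp add: key v0)
      also have "\<dots> = h 0 * T n k 0"
      proof -
        have h0: "e 0 * v k 0 + f 0 * v k 0 = h 0 * v k 0"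
          using eh[of 0 0] by (simp add: distrib_right[symmetric])
        show ?thesis by (simp add: h0 T_def mult_ac)
      qed
      finally show "of_nat (n choose k) * (T (Suc n) k 0 + T (Suc n) (Suc k) 0) = of_nat (n choose k) * (h 0 * T n k 0)"
        by simp
    qed
    also have "\<dots> = h 0 * Rc e u v n 0"
      by (simp add: R sum_distrib_left algebra_simps)
    finally show ?thesis .
  qed
  show "Rc e u v (Suc n) (Suc i) = h (Suc i) * Rc e u v n (Suc i) + Rc e u v n i"
  proof -
    have "Rc e u v (Suc n) (Suc i) = (\<Sum>k\<le>n. of_nat (n choose k) * (T (Suc n) k (Suc i) + T (Suc n) (Suc k) (Suc i)))"
      by (rule RS)
    also have "\<dots> = (\<Sum>k\<le>n. of_nat (n choose k) * (h (Suc i) * T n k (Suc i) + T n k i))"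
    proof (rule sum.cong[OF refl])
      fix k assume k: "k \<in> {..n}"
      have inner: "e j ^ (n - k) * u j * (e j * v k (Suc i - j) + v (Suc k) (Suc i - j))
          = h (Suc i) * (e j ^ (n - k) * u j * v k (Suc i - j)) + (e j ^ (n - k) * u j * v k (i - j))"
        if "j \<le> i" for j
      proof -
        have s: "Suc i - j = Suc (i - j)" using that by simp
        have "e j + f (Suc (i - j)) = h (Suc i)" using eh[of j "Suc (i - j)"] that by simp
        then have hx: "e j * v k (Suc (i - j)) + (f (Suc (i - j)) * v k (Suc (i - j)) + v k (i - j))
            = h (Suc i) * v k (Suc (i - j)) + v k (i - j)"
          by (simp add: add.assoc[symmetric] distrib_right[symmetric])
        show ?thesis unfolding s vS hx by (simp add: distrib_left mult_ac)
      qed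
      have last: "e (Suc i) ^ (n - k) * u (Suc i) * (e (Suc i) * v k 0 + v (Suc k) 0)
          = h (Suc i) * (e (Suc i) ^ (n - k) * u (Suc i) * v k 0)"
      proof -
        have h0: "e (Suc i) * v k 0 + f 0 * v k 0 = h (Suc i) * v k 0"
          using eh[of "Suc i" 0] by (simp add: distrib_right[symmetric])
        show ?thesis by (simp add: h0 v0 mult_ac)
      qed
      have "T (Suc n) k (Suc i) + T (Suc n) (Suc k) (Suc i)
          = (\<Sum>j\<le>i. h (Suc i) * (e j ^ (n - k) * u j * v k (Suc i - j)) + (e j ^ (n - k) * u j * v k (i - j)))
            + h (Suc i) * (e (Suc i) ^ (n - k) * u (Suc i) * v k 0)"
        using k by (simp add: key inner last)
      also have "\<dots> = h (Suc i) * T n k (Suc i) + T n k i"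
        by (simp add: T_def sum.distrib sum_distrib_left algebra_simps)
      finally show "of_nat (n choose k) * (T (Suc n) k (Suc i) + T (Suc n) (Suc k) (Suc i)) =
         of_nat (n choose k) * (h (Suc i) * T n k (Suc i) + T n k i)" by simp
    qed
    also have "\<dots> = h (Suc i) * Rc e u v n (Suc i) + Rc e u v n i"
      by (simp add: R sum_distrib_left sum.distrib algebra_simps)
    finally show ?thesis .
  qed
qed


lemma Rc_zero:
  assumes "v 0 0 = 1" "\<And>l. v 0 (Suc l) = 0"
  shows "Rc e u v 0 i = u i"
proof (cases i)
  case 0 then show ?thesis using assms by (simp add: Rc_def)
next
  case (Suc i')
  have "(\<Sum>j\<le>i'. u j * v 0 (Suc i' - j)) = 0"
    by (rule sum.neutral) (simp add: Suc_diff_le assms(2))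
  then show ?thesis using assms Suc by (simp add: Rc_def)
qed

lemma Rc_main:
  fixes u e f h :: "nat \<Rightarrow> 'a::comm_ring_1" and v w :: "nat \<Rightarrow> nat \<Rightarrow> 'a"
  assumes v0: "\<And>k. v (Suc k) 0 = f 0 * v k 0"
      and vS: "\<And>k l. v (Suc k) (Suc l) = f (Suc l) * v k (Suc l) + v k l"
      and eh: "\<And>j l. e j + f l = h (j + l)"
      and v00: "v 0 0 = 1" and v0S: "\<And>l. v 0 (Suc l) = 0"
      and w0: "\<And>N. w (Suc N) 0 = h 0 * w N 0"
      and wS: "\<And>N i. w (Suc N) (Suc i) = h (Suc i) * w N (Suc i) + w N i"
  shows "w (m + n) i = Rc e (w m) v n i"
proof (induction n arbitrary: i)
  case 0 then show ?case using Rc_zero[of v e "w m" i, OF v00 v0S] by simp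
next
  case (Suc n)
  show ?case
  proof (cases i)
    case 0 then show ?thesis
      using Rc_step(1)[where v=v and f=f and h=h and e=e and u="w m" and n=n, OF v0 vS eh] Suc.IH w0 by simp
  next
    case (Suc i') then show ?thesis
      using Rc_step(2)[where v=v and f=f and h=h and e=e and u="w m" and n=n and i=i', OF v0 vS eh] Suc.IH wS by simp
  qed
qed

lemma conv_sum:
  fixes g :: "nat \<Rightarrow> nat \<Rightarrow> 'a::comm_monoid_add"
  assumes "\<And>j l. g j l \<noteq> 0 \<Longrightarrow> j \<le> m \<and> l \<le> p" and "m + p \<le> N"
  shows "(\<Sum>i\<le>N. \<Sum>j\<le>i. g j (i - j)) = (\<Sum>j\<le>m. \<Sum>l\<le>p. g j l)"
proof -
  have "(\<Sum>i\<le>N. \<Sum>j\<le>i. g j (i - j)) = (\<Sum>(j,l)\<in>{(j,l). j + l \<le> N}. g j l)"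
    by (rule sum.triangle_reindex_eq[symmetric])
  also have "\<dots> = (\<Sum>(j,l)\<in>{..m} \<times> {..p}. g j l)"
  proof (rule sum.mono_neutral_right)
    show "finite {(j, l). j + l \<le> N}"
      by (rule finite_subset[of _ "{..N} \<times> {..N}"]) auto
    show "{..m} \<times> {..p} \<subseteq> {(j, l). j + l \<le> N}" using assms(2) by auto
    show "\<forall>x\<in>{(j, l). j + l \<le> N} - {..m} \<times> {..p}. (case x of (j, l) \<Rightarrow> g j l) = 0"
      using assms(1) by fastforce
  qed
  also have "\<dots> = (\<Sum>j\<le>m. \<Sum>l\<le>p. g j l)"
    by (simp add: sum.cartesian_product)
  finally show ?thesis .
qed

lemma Rc_sum:
  fixes u e :: "nat \<Rightarrow> 'a::comm_ring_1" and v :: "nat \<Rightarrow> nat \<Rightarrow> 'a"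
  assumes u: "\<And>j. m < j \<Longrightarrow> u j = 0" and v: "\<And>k l. k < l \<Longrightarrow> v k l = 0"
  shows "(\<Sum>i\<le>m+n. Rc e u v n i) =
    (\<Sum>j\<le>m. \<Sum>k\<le>n. of_nat (n choose k) * e j ^ (n - k) * u j * (\<Sum>l\<le>k. v k l))"
proof -
  have "(\<Sum>i\<le>m+n. Rc e u v n i) = (\<Sum>k\<le>n. of_nat (n choose k) *
      (\<Sum>i\<le>m+n. \<Sum>j\<le>i. e j ^ (n - k) * u j * v k (i - j)))"
    by (simp add: Rc_def sum_distrib_left sum.swap[of _ "{..m+n}"])
  also have "\<dots> = (\<Sum>k\<le>n. of_nat (n choose k) *
      (\<Sum>j\<le>m. \<Sum>l\<le>k. e j ^ (n - k) * u j * v k l))"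
  proof (rule sum.cong[OF refl])
    fix k assume k: "k \<in> {..n}"
    have "(\<Sum>i\<le>m+n. \<Sum>j\<le>i. e j ^ (n - k) * u j * v k (i - j)) = (\<Sum>j\<le>m. \<Sum>l\<le>k. e j ^ (n - k) * u j * v k l)"
    proof (rule conv_sum[where g="\<lambda>j l. e j ^ (n - k) * u j * v k l"])
      show "\<And>j l. e j ^ (n - k) * u j * v k l \<noteq> 0 \<Longrightarrow> j \<le> m \<and> l \<le> k"
        using u v by (metis linorder_not_le mult_zero_left mult_zero_right)
      show "m + k \<le> m + n" using k by simp
    qed
    then show "of_nat (n choose k) * (\<Sum>i\<le>m+n. \<Sum>j\<le>i. e j ^ (n - k) * u j * v k (i - j)) =
      of_nat (n choose k) * (\<Sum>j\<le>m. \<Sum>l\<le>k. e j ^ (n - k) * u j * v k l)" by simp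
  qed
  also have "\<dots> = (\<Sum>j\<le>m. \<Sum>k\<le>n. of_nat (n choose k) * e j ^ (n - k) * u j * (\<Sum>l\<le>k. v k l))"
    by (simp add: sum_distrib_left sum_distrib_right sum.swap[of _ "{..m}"] mult_ac)
  finally show ?thesis .
qed



definition resP :: "'a set \<Rightarrow> 'a set set \<Rightarrow> 'a set set" where
  "resP A P = (\<lambda>C. C \<inter> A) ` P - {{}}"

definition gext :: "('a set \<Rightarrow> 'a set) \<Rightarrow> 'a set set \<Rightarrow> 'a set set" where
  "gext E Q = (\<lambda>C. C \<union> E C) ` Q"

lemma partition_block_unique:
  "partition_on A P \<Longrightarrow> C \<in> P \<Longrightarrow> D \<in> P \<Longrightarrow> x \<in> C \<Longrightarrow> x \<in> D \<Longrightarrow> C = D"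
  unfolding partition_on_def disjoint_def by blast

lemma partition_subset: "partition_on A P \<Longrightarrow> C \<in> P \<Longrightarrow> C \<subseteq> A"
  unfolding partition_on_def by blast

lemma partition_nonempty: "partition_on A P \<Longrightarrow> C \<in> P \<Longrightarrow> C \<noteq> {}"
  unfolding partition_on_def by blast

lemma partition_ex: "partition_on A P \<Longrightarrow> x \<in> A \<Longrightarrow> \<exists>C\<in>P. x \<in> C"
  unfolding partition_on_def by blast

lemma gext_partition:
  assumes Q: "partition_on A Q" and AN: "A \<inter> N = {}"
    and EN: "\<And>C. C \<in> Q \<Longrightarrow> E C \<subseteq> N"
    and Ed: "\<And>C D. C \<in> Q \<Longrightarrow> D \<in> Q \<Longrightarrow> C \<noteq> D \<Longrightarrow> E C \<inter> E D = {}"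
    and Ncov: "N \<subseteq> \<Union>(E ` Q)"
  shows "partition_on (A \<union> N) (gext E Q)"
proof (rule partition_onI)
  show "\<Union>(gext E Q) = A \<union> N"
    using partition_onD1[OF Q] EN Ncov by (auto simp: gext_def)
  show "{} \<notin> gext E Q" using partition_onD3[OF Q] by (auto simp: gext_def)
  fix p q assume p: "p \<in> gext E Q" and q: "q \<in> gext E Q" and pq: "p \<noteq> q"
  then obtain C D where C: "C \<in> Q" "p = C \<union> E C" and D: "D \<in> Q" "q = D \<union> E D"
    by (auto simp: gext_def)
  with pq have CD: "C \<noteq> D" by auto
  have "C \<inter> D = {}" using partition_block_unique[OF Q C(1) D(1)] CD by blast
  moreover have "C \<subseteq> A" "D \<subseteq> A" using partition_subset[OF Q] C D by auto
  moreover have "E C \<subseteq> N" "E D \<subseteq> N" using EN C D by auto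
  moreover have "E C \<inter> E D = {}" using Ed C D CD by auto
  ultimately show "disjnt p q" using C D AN by (auto simp: disjnt_def)
qed

lemma gext_res:
  assumes Q: "partition_on A Q" and EA: "\<And>C. C \<in> Q \<Longrightarrow> E C \<inter> A = {}"
  shows "resP A (gext E Q) = Q"
proof -
  have "(C \<union> E C) \<inter> A = C" if "C \<in> Q" for C
    using partition_subset[OF Q that] EA[OF that] by blast
  then have "(\<lambda>C. C \<inter> A) ` gext E Q = Q"
    unfolding gext_def image_image by (simp cong: image_cong)
  then show ?thesis using partition_onD3[OF Q] by (simp add: resP_def)
qed

lemma gext_inj:
  assumes Q: "partition_on A Q" and EA: "\<And>C. C \<in> Q \<Longrightarrow> E C \<inter> A = {}"
  shows "inj_on (\<lambda>C. C \<union> E C) Q"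
proof (rule inj_onI)
  fix C D assume C: "C \<in> Q" and D: "D \<in> Q" and eq: "C \<union> E C = D \<union> E D"
  have "C = (C \<union> E C) \<inter> A" using partition_subset[OF Q C] EA[OF C] by blast
  also have "\<dots> = (D \<union> E D) \<inter> A" using eq by simp
  also have "\<dots> = D" using partition_subset[OF Q D] EA[OF D] by blast
  finally show "C = D" .
qed

lemma gext_card:
  assumes Q: "partition_on A Q" and EA: "\<And>C. C \<in> Q \<Longrightarrow> E C \<inter> A = {}"
  shows "card (gext E Q) = card Q"
  unfolding gext_def by (rule card_image[OF gext_inj[OF Q EA]])

lemma gext_surj:
  assumes P: "partition_on (A \<union> N) P" and AN: "A \<inter> N = {}"
    and ne: "\<And>C. C \<in> P \<Longrightarrow> C \<inter> A \<noteq> {}"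
    and E: "\<And>C. C \<in> P \<Longrightarrow> C \<inter> N = E (C \<inter> A)"
  shows "P = gext E (resP A P)"
proof -
  have r: "resP A P = (\<lambda>C. C \<inter> A) ` P" using ne by (auto simp: resP_def)
  have "(C \<inter> A) \<union> E (C \<inter> A) = C" if "C \<in> P" for C
    using partition_subset[OF P that] E[OF that] by blast
  then show ?thesis unfolding r gext_def image_image by (simp cong: image_cong)
qed

lemma res_self: "partition_on A Q \<Longrightarrow> resP A Q = Q"
  using partition_subset[of A Q] partition_onD3[of A Q]
  by (auto simp: resP_def image_iff) (metis Int_absorb2)+

lemma res_insert: "C \<inter> A = {} \<Longrightarrow> resP A (insert C P) = resP A P"
  by (auto simp: resP_def)

lemma partition_res: "partition_on B P \<Longrightarrow> A \<subseteq> B \<Longrightarrow> partition_on A (resP A P)"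
  using partition_on_restrict[of B P A] by (simp add: resP_def Int_commute Int_absorb2 cong: image_cong)

lemma card_partition_le:
  assumes P: "partition_on A P" and fin: "finite A"
  shows "card P \<le> card A"
proof -
  have finP: "finite P" using finite_elements[OF fin P] .
  have "card (\<Union>P) = sum card P" using partition_onD2[OF P]
    by (rule card_Union_disjoint) (meson fin finite_subset partition_subset[OF P])
  then have "card A = sum card P" using partition_onD1[OF P] by simp
  moreover have "sum (\<lambda>_. 1::nat) P \<le> sum card P"
  proof (rule sum_mono)
    fix C assume "C \<in> P"
    then have "C \<noteq> {}" "finite C"
      using partition_nonempty[OF P] partition_subset[OF P] fin finite_subset by blast+
    then show "1 \<le> card C" by (simp add: Suc_le_eq card_gt_0_iff)
  qed
  ultimately show ?thesis by simp
qed

definition arcsB :: "int set \<Rightarrow> (int \<times> int) set" where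
  "arcsB C = {(i, j). i \<in> C \<and> j \<in> C \<and> i < j \<and> (\<forall>k\<in>C. i < k \<longrightarrow> j \<le> k)}"

lemma arcs_Union: "arcs P = \<Union>(arcsB ` P)"
  unfolding arcs_def arcsB_def by blast

lemma arcs_gext: "arcs (gext E Q) = (\<Union>C\<in>Q. arcsB (C \<union> E C))"
  unfolding arcs_Union gext_def by blast

lemma arcsB_subset: "arcsB C \<subseteq> C \<times> C"
  unfolding arcsB_def by auto

lemma arcs_subset: "partition_on A P \<Longrightarrow> arcs P \<subseteq> A \<times> A"
  unfolding arcs_Union using arcsB_subset partition_subset by fastforce

lemma arcsB_insert_max:
  assumes "finite C" "C \<noteq> {}" "\<And>c. c \<in> C \<Longrightarrow> c < t"
  shows "arcsB (insert t C) = insert (Max C, t) (arcsB C)"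
proof -
  have M: "Max C \<in> C" "\<And>c. c \<in> C \<Longrightarrow> c \<le> Max C" using assms by auto
  show ?thesis
    unfolding arcsB_def using M assms(3)
    by (auto simp: not_less) (smt (verit) assms(3))+
qed

lemma arcsB_insert_min:
  assumes "finite C" "C \<noteq> {}" "\<And>c. c \<in> C \<Longrightarrow> t < c"
  shows "arcsB (insert t C) = insert (t, Min C) (arcsB C)"
proof -
  have M: "Min C \<in> C" "\<And>c. c \<in> C \<Longrightarrow> Min C \<le> c" using assms by auto
  show ?thesis
    unfolding arcsB_def using M assms(3)
    by (auto simp: not_less) (smt (verit) assms(3))+
qed

lemma arcsB_single: "arcsB {t} = {}"
  unfolding arcsB_def by auto



definition extA :: "nat \<Rightarrow> int set set \<Rightarrow> int set \<Rightarrow> int set set" where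
  "extA n Q B = gext (\<lambda>C. if C = B then {int n + 1} else {}) Q"

lemma IA_Suc: "{1..int (Suc n)} = {1..int n} \<union> {int n + 1}"
  by auto

lemma IA_Suc2: "{1..1 + int n} = insert (int n + 1) {1..int n}"
  by auto

lemma finite_PiA: "finite (PiA n)"
  unfolding PiA_def by (rule finitely_many_partition_on) simp

lemma PiA_0: "PiA 0 = {{}}"
  unfolding PiA_def by (auto simp: partition_on_empty)

lemma A_new:
  assumes "Q \<in> PiA n" shows "insert {int n + 1} Q \<in> PiA (Suc n)"
proof -
  have Q: "partition_on {1..int n} Q" using assms by (simp add: PiA_def)
  have d: "disjnt {int n + 1} (\<Union>Q)" using partition_onD1[OF Q, symmetric] by (auto simp: disjnt_def)
  have "{1..int (Suc n)} - {int n + 1} = {1..int n}" by auto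
  then show ?thesis using partition_on_insert[OF d, of "{1..int (Suc n)}"] Q by (simp add: PiA_def)
qed

lemma A_ext:
  assumes "Q \<in> PiA n" "B \<in> Q" shows "extA n Q B \<in> PiA (Suc n)"
proof -
  have Q: "partition_on {1..int n} Q" using assms by (simp add: PiA_def)
  have "partition_on ({1..int n} \<union> {int n + 1}) (gext (\<lambda>C. if C = B then {int n + 1} else {}) Q)"
    apply (rule gext_partition[OF Q, where N="{int n + 1}" and E="\<lambda>C. if C = B then {int n + 1} else {}"])
    using assms(2) by auto
  then show ?thesis by (simp add: PiA_def IA_Suc IA_Suc2 extA_def)
qed

lemma A_res_new: "Q \<in> PiA n \<Longrightarrow> resP {1..int n} (insert {int n + 1} Q) = Q"
  by (subst res_insert) (auto simp: PiA_def res_self)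

lemma A_res_ext: "Q \<in> PiA n \<Longrightarrow> resP {1..int n} (extA n Q B) = Q"
  unfolding extA_def by (rule gext_res) (auto simp: PiA_def)

lemma A_surj:
  assumes "P \<in> PiA (Suc n)"
  shows "P = insert {int n + 1} (resP {1..int n} P) \<or>
         (\<exists>B\<in>resP {1..int n} P. P = extA n (resP {1..int n} P) B)"
proof -
  let ?A = "{1..int n}" and ?t = "int n + 1"
  have P: "partition_on (?A \<union> {?t}) P" using assms by (simp add: PiA_def IA_Suc IA_Suc2)
  obtain Ct where Ct: "Ct \<in> P" "?t \<in> Ct" using partition_ex[OF P, of ?t] by blast
  have other: "C \<subseteq> ?A" if "C \<in> P" "C \<noteq> Ct" for C
  proof -
    have "?t \<notin> C" using partition_block_unique[OF P that(1) Ct(1) _ Ct(2)] that(2) by blast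
    then show ?thesis using partition_subset[OF P that(1)] by auto
  qed
  show ?thesis
  proof (cases "Ct = {?t}")
    case True
    have eqP: "P = insert {?t} (P - {{?t}})" using Ct True by auto
    have d: "disjnt {?t} (\<Union>(P - {{?t}}))"
    proof -
      have "?t \<notin> C" if "C \<in> P - {{?t}}" for C
      proof -
        have "C \<subseteq> ?A" using other that True by blast
        then show ?thesis by auto
      qed
      then show ?thesis unfolding disjnt_def by blast
    qed
    have P': "partition_on ?A (P - {{?t}})"
    proof -
      have "partition_on (?A \<union> {?t}) (insert {?t} (P - {{?t}}))"
        by (subst eqP[symmetric]) (rule P)
      then have "partition_on ((?A \<union> {?t}) - {?t}) (P - {{?t}})"
        using partition_on_insert[OF d] by blast
      moreover have "(?A \<union> {?t}) - {?t} = ?A" by auto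
      ultimately show ?thesis by simp
    qed
    have "P = insert {?t} (P - {{?t}})" using Ct True by auto
    moreover have "resP ?A P = P - {{?t}}"
    proof -
      have "resP ?A P = resP ?A (insert {?t} (P - {{?t}}))" by (rule arg_cong[OF eqP])
      also have "\<dots> = resP ?A (P - {{?t}})" by (rule res_insert) auto
      also have "\<dots> = P - {{?t}}" by (rule res_self[OF P'])
      finally show ?thesis .
    qed
    ultimately show ?thesis by (metis (no_types))
  next
    case False
    define B where "B = Ct \<inter> ?A"
    have CtB: "Ct = insert ?t B" using partition_subset[OF P Ct(1)] Ct(2) by (auto simp: B_def)
    have Bne: "B \<noteq> {}" using False CtB by auto
    have "P = gext (\<lambda>D. if D = B then {?t} else {}) (resP ?A P)"
    proof (rule gext_surj[OF P, where E="\<lambda>D. if D = B then {?t} else {}"])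
      show "?A \<inter> {?t} = {}" by auto
      fix C assume C: "C \<in> P"
      show "C \<inter> ?A \<noteq> {}"
        using other[OF C] partition_nonempty[OF P C] Bne B_def by (cases "C = Ct") auto
      show "C \<inter> {?t} = (if C \<inter> ?A = B then {?t} else {})"
      proof (cases "C = Ct")
        case True then show ?thesis using Ct(2) by (auto simp: B_def)
      next
        case F: False
        have "C \<inter> ?A = C" using other[OF C F] by auto
        moreover have "C \<noteq> B"
        proof
          assume "C = B"
          from Bne obtain y where y: "y \<in> B" by blast
          then have "y \<in> C" "y \<in> Ct" using \<open>C = B\<close> unfolding B_def by auto
          then show False using partition_block_unique[OF P C Ct(1)] F by auto
        qed
        moreover have "?t \<notin> C" using partition_block_unique[OF P C Ct(1)] F Ct(2) by auto
        ultimately show ?thesis by auto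
      qed
    qed
    moreover have "B \<in> resP ?A P" using Ct(1) Bne by (auto simp: resP_def B_def)
    ultimately show ?thesis unfolding extA_def by auto
  qed
qed

lemma A_new_notin: "Q \<in> PiA n \<Longrightarrow> insert {int n + 1} Q \<notin> extA n Q ` Q"
proof
  assume Q: "Q \<in> PiA n" and "insert {int n + 1} Q \<in> extA n Q ` Q"
  have Qp: "partition_on {1..int n} Q" using Q by (simp add: PiA_def)
  from \<open>insert {int n + 1} Q \<in> extA n Q ` Q\<close> obtain B where "B \<in> Q" "{int n + 1} \<in> extA n Q B" by blast
  then obtain C where C: "C \<in> Q" "{int n + 1} = C \<union> (if C = B then {int n + 1} else {})"
    unfolding extA_def gext_def by blast
  have "C \<subseteq> {1..int n}" "C \<noteq> {}" using partition_subset[OF Qp C(1)] partition_nonempty[OF Qp C(1)] by auto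
  moreover have "C \<subseteq> {int n + 1}" using C(2) by blast
  ultimately show False by fastforce
qed

lemma A_ext_inj: "Q \<in> PiA n \<Longrightarrow> inj_on (extA n Q) Q"
proof (rule inj_onI)
  fix B B' assume Q: "Q \<in> PiA n" and B: "B \<in> Q" and B': "B' \<in> Q" and eq: "extA n Q B = extA n Q B'"
  have Qp: "partition_on {1..int n} Q" using Q by (simp add: PiA_def)
  have "B \<union> {int n + 1} \<in> extA n Q B" unfolding extA_def gext_def
    by (rule image_eqI[where x=B]) (simp_all add: B)
  then have "B \<union> {int n + 1} \<in> extA n Q B'" using eq by simp
  then obtain C where C: "C \<in> Q" "B \<union> {int n + 1} = C \<union> (if C = B' then {int n + 1} else {})"
    unfolding extA_def gext_def by (rule imageE) (rule that, assumption, simp)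
  have sub: "B \<subseteq> {1..int n}" "C \<subseteq> {1..int n}"
    using partition_subset[OF Qp B] partition_subset[OF Qp C(1)] by auto
  have tB: "int n + 1 \<notin> B" "int n + 1 \<notin> C" using sub by auto
  have "C = B'"
  proof (rule ccontr)
    assume "C \<noteq> B'"
    then have "B \<union> {int n + 1} = C" using C(2) by simp
    then show False using tB by blast
  qed
  moreover have "B = C"
  proof -
    have "B \<union> {int n + 1} = C \<union> {int n + 1}" using C(2) \<open>C = B'\<close> by simp
    then show ?thesis using tB by blast
  qed
  ultimately show "B = B'" by simp
qed

lemma A_fiber:
  assumes Q: "Q \<in> PiA n"
  shows "{P \<in> PiA (Suc n). resP {1..int n} P = Q} = insert (insert {int n + 1} Q) (extA n Q ` Q)"
proof (rule set_eqI, rule iffI)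
  fix P assume "P \<in> {P \<in> PiA (Suc n). resP {1..int n} P = Q}"
  then have P: "P \<in> PiA (Suc n)" and r: "resP {1..int n} P = Q" by auto
  from A_surj[OF P] show "P \<in> insert (insert {int n + 1} Q) (extA n Q ` Q)" unfolding r by blast
next
  fix P assume "P \<in> insert (insert {int n + 1} Q) (extA n Q ` Q)"
  then show "P \<in> {P \<in> PiA (Suc n). resP {1..int n} P = Q}"
    using A_new[OF Q] A_ext[OF Q] A_res_new[OF Q] A_res_ext[OF Q] by blast
qed

lemma A_res_in: "P \<in> PiA (Suc n) \<Longrightarrow> resP {1..int n} P \<in> PiA n"
  unfolding PiA_def by (auto intro: partition_res)

lemma A_decomp:
  "(\<Sum>P\<in>PiA (Suc n). F P) = (\<Sum>Q\<in>PiA n. F (insert {int n + 1} Q) + (\<Sum>B\<in>Q. F (extA n Q B)))"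
proof -
  have "(\<Sum>P\<in>PiA (Suc n). F P) = (\<Sum>Q\<in>PiA n. \<Sum>P\<in>{P \<in> PiA (Suc n). resP {1..int n} P = Q}. F P)"
    by (rule sum.group[symmetric]) (auto simp: finite_PiA A_res_in)
  also have "\<dots> = (\<Sum>Q\<in>PiA n. F (insert {int n + 1} Q) + (\<Sum>B\<in>Q. F (extA n Q B)))"
  proof (rule sum.cong[OF refl])
    fix Q assume Q: "Q \<in> PiA n"
    have fin: "finite Q" using Q finite_elements[of "{1..int n}" Q] by (auto simp: PiA_def)
    show "(\<Sum>P\<in>{P \<in> PiA (Suc n). resP {1..int n} P = Q}. F P) = F (insert {int n + 1} Q) + (\<Sum>B\<in>Q. F (extA n Q B))"
      unfolding A_fiber[OF Q]
      using A_new_notin[OF Q] fin by (simp add: sum.reindex[OF A_ext_inj[OF Q]])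
  qed
  finally show ?thesis .
qed

lemma A_card_new: "Q \<in> PiA n \<Longrightarrow> card (insert {int n + 1} Q) = Suc (card Q)"
proof -
  assume Q: "Q \<in> PiA n"
  have fin: "finite Q" using Q finite_elements[of "{1..int n}" Q] by (auto simp: PiA_def)
  have "{int n + 1} \<notin> Q"
  proof
    assume "{int n + 1} \<in> Q"
    moreover have "partition_on {1..int n} Q" using Q by (simp add: PiA_def)
    ultimately have "{int n + 1} \<subseteq> {1..int n}" using partition_subset by blast
    then show False by simp
  qed
  then show ?thesis using fin by simp
qed

lemma A_arcs_new: "arcs (insert {t} Q) = arcs Q"
  by (simp add: arcs_Union arcsB_single)

lemma A_card_ext: "Q \<in> PiA n \<Longrightarrow> card (extA n Q B) = card Q"
  unfolding extA_def by (rule gext_card) (auto simp: PiA_def)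

lemma finite_arcs: "partition_on A P \<Longrightarrow> finite A \<Longrightarrow> finite (arcs P)"
  using arcs_subset finite_subset by blast

lemma A_arcs_ext:
  assumes Q: "Q \<in> PiA n" and B: "B \<in> Q"
  shows "card (arcs (extA n Q B)) = Suc (card (arcs Q))"
proof -
  have Qp: "partition_on {1..int n} Q" using Q by (simp add: PiA_def)
  have Bs: "B \<subseteq> {1..int n}" "B \<noteq> {}" using partition_subset[OF Qp B] partition_nonempty[OF Qp B] by auto
  have finB: "finite B" using Bs finite_subset by blast
  have "arcs (extA n Q B) = (\<Union>C\<in>Q. arcsB (C \<union> (if C = B then {int n + 1} else {})))"
    unfolding extA_def by (rule arcs_gext)
  also have "\<dots> = (\<Union>C\<in>Q. (if C = B then insert (Max B, int n + 1) (arcsB C) else arcsB C))"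
  proof (rule SUP_cong[OF refl])
    fix C assume "C \<in> Q"
    show "arcsB (C \<union> (if C = B then {int n + 1} else {})) = (if C = B then insert (Max B, int n + 1) (arcsB C) else arcsB C)"
      proof -
      have lt: "\<And>c. c \<in> B \<Longrightarrow> c < int n + 1" using Bs(1) by auto
      show ?thesis using arcsB_insert_max[OF finB Bs(2) lt] by simp
    qed
  qed
  also have "\<dots> = insert (Max B, int n + 1) (arcs Q)"
    using B unfolding arcs_Union by (auto split: if_splits)
  finally have eq: "arcs (extA n Q B) = insert (Max B, int n + 1) (arcs Q)" .
  have "(Max B, int n + 1) \<notin> arcs Q" using arcs_subset[OF Qp] by auto
  moreover have "finite (arcs Q)" using finite_arcs[OF Qp] by simp
  ultimately show ?thesis using eq by simp
qed



definition sv :: "'a::comm_ring_1 \<Rightarrow> nat \<Rightarrow> nat \<Rightarrow> 'a" where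
  "sv y k l = of_nat (Stirling k l) * y ^ (k - l)"

lemma sv_0: "sv y (Suc k) 0 = (of_nat 0 * y) * sv y k 0"
  by (simp add: sv_def)

lemma sv_S: "sv y (Suc k) (Suc l) = (of_nat (Suc l) * y) * sv y k (Suc l) + sv y k l"
proof (cases "Suc l \<le> k")
  case True
  then have "k - l = Suc (k - Suc l)" by simp
  then show ?thesis by (simp add: sv_def algebra_simps)
next
  case False
  then show ?thesis by (simp add: sv_def)
qed

lemma sv_00: "sv y 0 0 = 1" and sv_0S: "sv y 0 (Suc l) = 0" and sv_less: "k < l \<Longrightarrow> sv y k l = 0"
  by (simp_all add: sv_def)


definition gA :: "nat \<Rightarrow> 'a::comm_ring_1 \<Rightarrow> nat \<Rightarrow> 'a" where
  "gA n x i = (\<Sum>P\<in>PiA n. if card P = i then x ^ card (arcs P) else 0)"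

lemma gA_Suc: "gA (Suc n) x i = (case i of 0 \<Rightarrow> 0 | Suc i' \<Rightarrow> gA n x i') + of_nat i * x * gA n x i"
proof -
  let ?F = "\<lambda>P. if card P = i then x ^ card (arcs P) else 0"
  have "gA (Suc n) x i = (\<Sum>Q\<in>PiA n. ?F (insert {int n + 1} Q) + (\<Sum>B\<in>Q. ?F (extA n Q B)))"
    unfolding gA_def by (rule A_decomp)
  also have "\<dots> = (\<Sum>Q\<in>PiA n. (if Suc (card Q) = i then x ^ card (arcs Q) else 0)
      + (if card Q = i then of_nat i * x * x ^ card (arcs Q) else 0))"
  proof (rule sum.cong[OF refl])
    fix Q assume Q: "Q \<in> PiA n"
    have "(\<Sum>B\<in>Q. ?F (extA n Q B)) = (\<Sum>B\<in>Q. if card Q = i then x * x ^ card (arcs Q) else 0)"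
      by (rule sum.cong[OF refl]) (simp add: A_card_ext[OF Q] A_arcs_ext[OF Q])
    also have "\<dots> = (if card Q = i then of_nat i * x * x ^ card (arcs Q) else 0)"
      by (simp add: mult.assoc)
    finally show "?F (insert {int n + 1} Q) + (\<Sum>B\<in>Q. ?F (extA n Q B)) =
      (if Suc (card Q) = i then x ^ card (arcs Q) else 0) + (if card Q = i then of_nat i * x * x ^ card (arcs Q) else 0)"
      by (simp add: A_card_new[OF Q] A_arcs_new)
  qed
  also have "\<dots> = (case i of 0 \<Rightarrow> 0 | Suc i' \<Rightarrow> gA n x i') + of_nat i * x * gA n x i"
  proof -
    have "(\<Sum>Q\<in>PiA n. if Suc (card Q) = i then x ^ card (arcs Q) else 0) = (case i of 0 \<Rightarrow> 0 | Suc i' \<Rightarrow> gA n x i')"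
      by (cases i) (simp_all add: gA_def)
    moreover have "(\<Sum>Q\<in>PiA n. if card Q = i then of_nat i * x * x ^ card (arcs Q) else 0) = of_nat i * x * gA n x i"
      by (simp add: gA_def sum_distrib_left if_distrib cong: if_cong)
    ultimately show ?thesis by (simp add: sum.distrib)
  qed
  finally show ?thesis .
qed

lemma gA_closed: "gA n x i = sv x n i"
proof (induction n arbitrary: i)
  case 0 then show ?case unfolding gA_def PiA_0 by (cases i) (simp_all add: sv_def arcs_def)
next
  case (Suc n)
  show ?case
  proof (cases i)
    case 0 then show ?thesis by (simp add: gA_Suc sv_def)
  next
    case (Suc i') then show ?thesis
      using sv_S[of x n i'] by (simp add: gA_Suc Suc.IH algebra_simps)
  qed
qed

lemma bellA_sv: "bellA n y = (\<Sum>l\<le>n. sv y n l)"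
proof -
  have "bellA n y = (\<Sum>P\<in>PiA n. \<Sum>i\<le>n. if card P = i then y ^ card (arcs P) else 0)"
  proof (unfold bellA_def, rule sum.cong[OF refl])
    fix P assume P: "P \<in> PiA n"
    have "card P \<le> card {1..int n}"
      using P by (intro card_partition_le) (auto simp: PiA_def)
    then have "card P \<le> n" by simp
    then show "y ^ card (arcs P) = (\<Sum>i\<le>n. if card P = i then y ^ card (arcs P) else 0)"
      by (simp add: sum.delta)
  qed
  also have "\<dots> = (\<Sum>i\<le>n. gA n y i)" unfolding gA_def by (rule sum.swap)
  finally show ?thesis by (simp add: gA_closed)
qed



lemma neg_neg_image [simp]: "uminus ` uminus ` (C::int set) = C"
  by (simp add: image_image)

lemma neg_image_eq_iff [simp]: "(uminus ` (C::int set) = uminus ` D) \<longleftrightarrow> C = D"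
  by (metis neg_neg_image)

lemma mem_neg_image: "(x::int) \<in> uminus ` C \<longleftrightarrow> -x \<in> C"
  by (auto simp: image_iff) (metis minus_minus)

lemma neg_image_swap: "(uminus ` (C::int set) = D) \<longleftrightarrow> C = uminus ` D"
  by (metis neg_neg_image)

lemma closed_arcs_sym:
  assumes P: "partition_on X P" and cl: "\<And>C. C \<in> P \<Longrightarrow> uminus ` C \<in> P"
    and a: "(i, j) \<in> arcs P"
  shows "(-j, -i) \<in> arcs P"
proof -
  from a obtain C where C: "C \<in> P" "i \<in> C" "j \<in> C" "i < j" and mn: "\<And>k. k \<in> C \<Longrightarrow> i < k \<Longrightarrow> j \<le> k"
    unfolding arcs_def by blast
  have "-j \<in> uminus ` C" "-i \<in> uminus ` C" using C by auto
  moreover have mn': "-i \<le> k" if "k \<in> uminus ` C" "-j < k" for k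
  proof -
    have "-k \<in> C" using that(1) by (simp add: mem_neg_image)
    moreover have "-k < j" using that(2) by simp
    ultimately have "\<not> i < -k" using mn by force
    then show ?thesis by simp
  qed
  ultimately have "\<exists>B\<in>P. -j \<in> B \<and> -i \<in> B \<and> -j < -i \<and> (\<forall>k\<in>B. -j < k \<longrightarrow> -i \<le> k)"
    using cl[OF C(1)] C(4) by (intro bexI[where x="uminus ` C"]) simp_all
  then show ?thesis unfolding arcs_def by simp
qed

lemma sym_same_block:
  assumes P: "partition_on X P" and fin: "finite X"
    and sym: "\<And>i j. (i, j) \<in> arcs P \<Longrightarrow> (-j, -i) \<in> arcs P"
    and C: "C \<in> P"
  shows "i \<in> C \<Longrightarrow> j \<in> C \<Longrightarrow> i < j \<Longrightarrow> \<exists>D\<in>P. -i \<in> D \<and> -j \<in> D"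
proof (induction "nat (j - i)" arbitrary: i rule: less_induct)
  case less
  have finC: "finite C" using partition_subset[OF P C] fin finite_subset by blast
  define S where "S = {k \<in> C. i < k}"
  have finS: "finite S" using finC by (simp add: S_def)
  have jS: "j \<in> S" using less by (simp add: S_def)
  define s where "s = Min S"
  have "S \<noteq> {}" using jS by blast
  then have sS: "s \<in> S" using finS Min_in[of S] by (simp add: s_def)
  have sj: "s \<le> j" using finS jS by (simp add: s_def)
  have smin: "\<And>k. k \<in> C \<Longrightarrow> i < k \<Longrightarrow> s \<le> k" using finS by (simp add: s_def S_def)
  have "(i, s) \<in> arcs P" unfolding arcs_def using C less(2) sS smin by (auto simp: S_def)
  then have "(-s, -i) \<in> arcs P" by (rule sym)
  then obtain D where D: "D \<in> P" "-s \<in> D" "-i \<in> D" unfolding arcs_def by blast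
  show ?case
  proof (cases "s = j")
    case True then show ?thesis using D by blast
  next
    case False
    then have "s < j" using sj by simp
    moreover have "i < s" using sS by (simp add: S_def)
    ultimately have "nat (j - s) < nat (j - i)" by simp
    moreover have "s \<in> C" using sS by (simp add: S_def)
    ultimately obtain D' where D': "D' \<in> P" "-s \<in> D'" "-j \<in> D'"
      using less(1)[of s] less(3) \<open>s < j\<close> by blast
    have "D = D'" using partition_block_unique[OF P D(1) D'(1) D(2) D'(2)] .
    then show ?thesis using D D' by blast
  qed
qed

lemma sym_closed:
  assumes P: "partition_on X P" and fin: "finite X" and sX: "\<And>x. x \<in> X \<Longrightarrow> -x \<in> X"
    and sym: "\<And>i j. (i, j) \<in> arcs P \<Longrightarrow> (-j, -i) \<in> arcs P"
    and C: "C \<in> P"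
  shows "uminus ` C \<in> P"
proof -
  have same: "\<exists>D\<in>P. -i \<in> D \<and> -j \<in> D" if "E \<in> P" "i \<in> E" "j \<in> E" for E i j
  proof -
    have "i \<in> X" using partition_subset[OF P that(1)] that(2) by blast
    then have "-i \<in> X" by (rule sX)
    then obtain D where "D \<in> P" "-i \<in> D" using partition_ex[OF P] by blast
    then show ?thesis
      using sym_same_block[OF P fin sym that(1), of i j] sym_same_block[OF P fin sym that(1), of j i] that
      by (cases i j rule: linorder_cases) auto
  qed
  obtain c where c: "c \<in> C" using partition_nonempty[OF P C] by blast
  have "-c \<in> X" using sX partition_subset[OF P C] c by blast
  then obtain D where D: "D \<in> P" "-c \<in> D" using partition_ex[OF P] by blast
  have "uminus ` C = D"
  proof (rule set_eqI)
    fix y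
    show "y \<in> uminus ` C \<longleftrightarrow> y \<in> D"
    proof
      assume "y \<in> uminus ` C"
      then have "-y \<in> C" by (simp add: mem_neg_image)
      then obtain D' where D': "D' \<in> P" "- (-y) \<in> D'" "-c \<in> D'" using same[OF C _ c] by blast
      have "D' = D" using partition_block_unique[OF P D'(1) D(1) D'(3) D(2)] .
      then show "y \<in> D" using D' by simp
    next
      assume "y \<in> D"
      then obtain E where E: "E \<in> P" "-y \<in> E" "- (-c) \<in> E" using same[OF D(1) _ D(2)] by blast
      have "E = C" using partition_block_unique[OF P E(1) C] E(3) c by simp
      then show "y \<in> uminus ` C" using E by (simp add: mem_neg_image)
    qed
  qed
  then show ?thesis using D by simp
qed

definition PB :: "int set \<Rightarrow> int set set set" where
  "PB X = {P. partition_on X P \<and> (\<forall>C\<in>P. uminus ` C \<in> P) \<and> (\<forall>C\<in>P. uminus ` C = C \<longrightarrow> 0 \<in> C)}"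

lemma XB_eq: "{0} \<union> {1..int n} \<union> {- int n..-1} = {- int n..int n}"
  by auto

lemma PiB_PB: "PiB n = PB {- int n..int n}"
proof -
  have "(\<forall>i j. (i, j) \<in> arcs P \<longleftrightarrow> (-j, -i) \<in> arcs P) \<longleftrightarrow> (\<forall>C\<in>P. uminus ` C \<in> P)"
    if P: "partition_on {- int n..int n} P" for P
  proof
    assume "\<forall>i j. (i, j) \<in> arcs P \<longleftrightarrow> (-j, -i) \<in> arcs P"
    then show "\<forall>C\<in>P. uminus ` C \<in> P"
      using sym_closed[OF P] by auto
  next
    assume cl: "\<forall>C\<in>P. uminus ` C \<in> P"
    have "(i, j) \<in> arcs P \<Longrightarrow> (-j, -i) \<in> arcs P" for i j
      using closed_arcs_sym[OF P] cl by blast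
    then show "\<forall>i j. (i, j) \<in> arcs P \<longleftrightarrow> (-j, -i) \<in> arcs P"
      by (metis minus_minus)
  qed
  then show ?thesis unfolding PiB_def PB_def XB_eq by blast
qed



definition newB :: "int \<Rightarrow> int set set \<Rightarrow> int set set" where
  "newB t Q = insert {t} (insert {-t} Q)"

definition EB :: "int \<Rightarrow> int set \<Rightarrow> int set \<Rightarrow> int set" where
  "EB t B C = (if C = B then {t} else {}) \<union> (if C = uminus ` B then {-t} else {})"

definition extB :: "int \<Rightarrow> int set set \<Rightarrow> int set \<Rightarrow> int set set" where
  "extB t Q B = gext (EB t B) Q"

lemma Min_neg_image:
  assumes "finite (B::int set)" "B \<noteq> {}"
  shows "Min (uminus ` B) = - Max B"
proof (rule Min_eqI)
  show "finite (uminus ` B)" using assms by simp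
  show "- Max B \<in> uminus ` B" using assms by simp
  fix y assume "y \<in> uminus ` B"
  then have "-y \<in> B" by (simp add: mem_neg_image)
  then have "-y \<le> Max B" using assms by simp
  then show "- Max B \<le> y" by simp
qed

locale bsetup =
  fixes X :: "int set" and t :: int
  assumes sX: "\<And>x. x \<in> X \<Longrightarrow> -x \<in> X"
    and ltX: "\<And>x. x \<in> X \<Longrightarrow> x < t"
    and finX: "finite X"
    and zX: "0 \<in> X"
begin

lemma tX: "t \<notin> X" using ltX by blast

lemma mtX: "-t \<notin> X" using ltX sX by fastforce

lemma tpos: "0 < t" using ltX zX by blast

lemma tne: "t \<noteq> -t" using tpos by simp

lemma gtX: "x \<in> X \<Longrightarrow> -t < x"
  using ltX[OF sX, of x] by simp

lemma negX: "uminus ` X = X"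
proof (rule set_eqI)
  fix x show "x \<in> uminus ` X \<longleftrightarrow> x \<in> X"
    using sX[of x] sX[of "-x"] by (auto simp: mem_neg_image)
qed

lemma neg_Int_X: "uminus ` (C \<inter> X) = uminus ` C \<inter> X"
proof -
  have "uminus ` (C \<inter> X) = uminus ` C \<inter> uminus ` X"
    by (rule image_Int) (simp add: inj_on_def)
  then show ?thesis by (simp add: negX)
qed

lemma PB_part: "P \<in> PB Y \<Longrightarrow> partition_on Y P" by (simp add: PB_def)
lemma PB_cl: "P \<in> PB Y \<Longrightarrow> C \<in> P \<Longrightarrow> uminus ` C \<in> P" by (simp add: PB_def)
lemma PB_zero: "P \<in> PB Y \<Longrightarrow> C \<in> P \<Longrightarrow> uminus ` C = C \<Longrightarrow> 0 \<in> C" by (simp add: PB_def)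

lemma B_new:
  assumes Q: "Q \<in> PB X" shows "newB t Q \<in> PB (X \<union> {t, -t})"
proof -
  have Qp: "partition_on X Q" using PB_part[OF Q] .
  have sub: "\<And>C. C \<in> Q \<Longrightarrow> C \<subseteq> X" using partition_subset[OF Qp] .
  have dis: "\<And>C D. C \<in> Q \<Longrightarrow> D \<in> Q \<Longrightarrow> C \<noteq> D \<Longrightarrow> C \<inter> D = {}"
    using partition_block_unique[OF Qp] by blast
  have part: "partition_on (X \<union> {t, -t}) (newB t Q)"
  proof (rule partition_onI)
    show "\<Union>(newB t Q) = X \<union> {t, -t}" using partition_onD1[OF Qp] by (auto simp: newB_def)
    show "{} \<notin> newB t Q" using partition_onD3[OF Qp] by (auto simp: newB_def)
    fix p q assume p: "p \<in> newB t Q" and q: "q \<in> newB t Q" and pq: "p \<noteq> q"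
    show "disjnt p q"
      using p q pq sub dis tX mtX tne unfolding newB_def disjnt_def by auto
  qed
  have cl: "\<forall>C\<in>newB t Q. uminus ` C \<in> newB t Q"
    using PB_cl[OF Q] by (auto simp: newB_def)
  have z: "\<forall>C\<in>newB t Q. uminus ` C = C \<longrightarrow> 0 \<in> C"
    using PB_zero[OF Q] tne by (auto simp: newB_def)
  show ?thesis using part cl z by (simp add: PB_def)
qed

lemma EB_neg: "uminus ` (C \<union> EB t B C) = uminus ` C \<union> EB t B (uminus ` C)"
proof -
  have "uminus ` EB t B C = EB t B (uminus ` C)"
    unfolding EB_def by (auto simp: neg_image_swap)
  then show ?thesis by (simp add: image_Un)
qed

lemma B_ext:
  assumes Q: "Q \<in> PB X" and B: "B \<in> Q" shows "extB t Q B \<in> PB (X \<union> {t, -t})"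
proof -
  have Qp: "partition_on X Q" using PB_part[OF Q] .
  have mB: "uminus ` B \<in> Q" using PB_cl[OF Q B] .
  have part: "partition_on (X \<union> {t, -t}) (gext (EB t B) Q)"
  proof (rule gext_partition[OF Qp, where N="{t, -t}" and E="EB t B"])
    show "X \<inter> {t, -t} = {}" using tX mtX by auto
    show "\<And>C. C \<in> Q \<Longrightarrow> EB t B C \<subseteq> {t, -t}" by (auto simp: EB_def)
    show "\<And>C D. C \<in> Q \<Longrightarrow> D \<in> Q \<Longrightarrow> C \<noteq> D \<Longrightarrow> EB t B C \<inter> EB t B D = {}"
      using tne by (auto simp: EB_def)
    show "{t, -t} \<subseteq> \<Union>(EB t B ` Q)"
    proof -
      have "t \<in> EB t B B" "-t \<in> EB t B (uminus ` B)" by (auto simp: EB_def)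
      then show ?thesis using B mB by blast
    qed
  qed
  have cl: "\<forall>C\<in>gext (EB t B) Q. uminus ` C \<in> gext (EB t B) Q"
  proof
    fix D assume "D \<in> gext (EB t B) Q"
    then obtain C where C: "C \<in> Q" "D = C \<union> EB t B C" by (auto simp: gext_def)
    have "uminus ` D = uminus ` C \<union> EB t B (uminus ` C)" using C(2) EB_neg by simp
    moreover have "uminus ` C \<in> Q" using PB_cl[OF Q C(1)] .
    ultimately show "uminus ` D \<in> gext (EB t B) Q" unfolding gext_def by blast
  qed
  have z: "\<forall>D\<in>gext (EB t B) Q. uminus ` D = D \<longrightarrow> 0 \<in> D"
  proof (intro ballI impI)
    fix D assume "D \<in> gext (EB t B) Q" and eq: "uminus ` D = D"
    then obtain C where C: "C \<in> Q" "D = C \<union> EB t B C" by (auto simp: gext_def)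
    have CX: "C \<subseteq> X" "uminus ` C \<subseteq> X"
      using partition_subset[OF Qp C(1)] partition_subset[OF Qp PB_cl[OF Q C(1)]] by auto
    have EN: "EB t B C \<inter> X = {}" "EB t B (uminus ` C) \<inter> X = {}" using tX mtX by (auto simp: EB_def)
    have "uminus ` C \<union> EB t B (uminus ` C) = C \<union> EB t B C" using eq C(2) EB_neg by simp
    then have "(uminus ` C \<union> EB t B (uminus ` C)) \<inter> X = (C \<union> EB t B C) \<inter> X" by simp
    then have "uminus ` C = C" using CX EN by blast
    then have "0 \<in> C" using PB_zero[OF Q C(1)] by simp
    then show "0 \<in> D" using C(2) by simp
  qed
  show ?thesis using part cl z by (simp add: PB_def extB_def)
qed

lemma B_res_new: "Q \<in> PB X \<Longrightarrow> resP X (newB t Q) = Q"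
  unfolding newB_def using tX mtX
  by (subst res_insert, simp, subst res_insert, simp) (simp add: res_self PB_part)

lemma B_res_ext: "Q \<in> PB X \<Longrightarrow> resP X (extB t Q B) = Q"
  unfolding extB_def
  by (rule gext_res[OF PB_part]) (use tX mtX in \<open>auto simp: EB_def\<close>)

lemma B_res_in:
  assumes P: "P \<in> PB (X \<union> {t, -t})" shows "resP X P \<in> PB X"
proof -
  have Pp: "partition_on (X \<union> {t, -t}) P" using PB_part[OF P] .
  have part: "partition_on X (resP X P)" by (rule partition_res[OF Pp]) blast
  have cl: "\<forall>D\<in>resP X P. uminus ` D \<in> resP X P"
  proof
    fix D assume "D \<in> resP X P"
    then obtain C where C: "C \<in> P" "D = C \<inter> X" "D \<noteq> {}" by (auto simp: resP_def)
    have "uminus ` D = uminus ` C \<inter> X" using C(2) neg_Int_X by simp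
    moreover have "uminus ` D \<noteq> {}" using C(3) by simp
    moreover have "uminus ` C \<in> P" using PB_cl[OF P C(1)] .
    ultimately show "uminus ` D \<in> resP X P" unfolding resP_def by auto
  qed
  have z: "\<forall>D\<in>resP X P. uminus ` D = D \<longrightarrow> 0 \<in> D"
  proof (intro ballI impI)
    fix D assume "D \<in> resP X P" and eq: "uminus ` D = D"
    then obtain C where C: "C \<in> P" "D = C \<inter> X" "D \<noteq> {}" by (auto simp: resP_def)
    obtain d where d: "d \<in> D" using C(3) by blast
    have "d \<in> C" using d C(2) by simp
    moreover have "d \<in> uminus ` C"
    proof -
      have "d \<in> uminus ` D" using d eq by simp
      then show ?thesis using C(2) by auto
    qed
    ultimately have "uminus ` C = C"
      using partition_block_unique[OF Pp PB_cl[OF P C(1)] C(1)] by blast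
    then have "0 \<in> C" using PB_zero[OF P C(1)] by simp
    then show "0 \<in> D" using C(2) zX by simp
  qed
  show ?thesis using part cl z by (simp add: PB_def)
qed


lemma B_surj:
  assumes P: "P \<in> PB (X \<union> {t, -t})"
  shows "P = newB t (resP X P) \<or> (\<exists>B\<in>resP X P. P = extB t (resP X P) B)"
proof -
  have Pp: "partition_on (X \<union> {t, -t}) P" using PB_part[OF P] .
  obtain Ct where Ct: "Ct \<in> P" "t \<in> Ct" using partition_ex[OF Pp, of t] by blast
  have mCt: "uminus ` Ct \<in> P" using PB_cl[OF P Ct(1)] .
  have mt: "-t \<in> uminus ` Ct" using Ct(2) by simp
  have other: "C \<subseteq> X" if "C \<in> P" "C \<noteq> Ct" "C \<noteq> uminus ` Ct" for C
  proof -
    have "t \<notin> C" using partition_block_unique[OF Pp that(1) Ct(1)] that(2) Ct(2) by blast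
    moreover have "-t \<notin> C" using partition_block_unique[OF Pp that(1) mCt] that(3) mt by blast
    ultimately show ?thesis using partition_subset[OF Pp that(1)] by blast
  qed
  have ne: "\<And>C. C \<in> P \<Longrightarrow> C \<noteq> {}" using partition_nonempty[OF Pp] .
  show ?thesis
  proof (cases "Ct = {t}")
    case True
    have mCt': "uminus ` Ct = {-t}" using True by simp
    define P' where "P' = P - {{t}, {-t}}"
    have P'X: "C \<subseteq> X" if "C \<in> P'" for C using other that True mCt' by (auto simp: P'_def)
    have eqP: "P = newB t P'" using Ct True mCt mCt' by (auto simp: newB_def P'_def)
    have P'p: "partition_on X P'"
    proof (rule partition_onI)
      show "\<Union>P' = X"
      proof
        show "\<Union>P' \<subseteq> X" using P'X by blast
        show "X \<subseteq> \<Union>P'"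
        proof
          fix x assume x: "x \<in> X"
          then obtain C where C: "C \<in> P" "x \<in> C" using partition_ex[OF Pp, of x] by blast
          have "C \<noteq> {t}" "C \<noteq> {-t}" using C(2) x tX mtX by auto
          then show "x \<in> \<Union>P'" using C by (auto simp: P'_def)
        qed
      qed
      show "{} \<notin> P'" using ne by (auto simp: P'_def)
      fix p q assume "p \<in> P'" "q \<in> P'" "p \<noteq> q"
      then show "disjnt p q" using partition_block_unique[OF Pp] by (auto simp: P'_def disjnt_def)
    qed
    have "resP X P = P'"
    proof -
      have "resP X P = resP X (newB t P')" using eqP by (rule arg_cong)
      also have "\<dots> = P'" unfolding newB_def using tX mtX
        by (subst res_insert, simp, subst res_insert, simp) (rule res_self[OF P'p])
      finally show ?thesis .
    qed
    then show ?thesis using eqP by simp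
  next
    case False
    define B where "B = Ct \<inter> X"
    have CtXN: "Ct \<subseteq> X \<union> {t, -t}" using partition_subset[OF Pp Ct(1)] .
    have selfneg: "uminus ` Ct = Ct" if "-t \<in> Ct"
      using partition_block_unique[OF Pp mCt Ct(1) mt that] .
    have Bne: "B \<noteq> {}"
    proof
      assume B0: "B = {}"
      then have "Ct \<subseteq> {t, -t}" using CtXN by (auto simp: B_def)
      then have "-t \<in> Ct" using False Ct(2) by blast
      then have "0 \<in> Ct" using PB_zero[OF P Ct(1)] selfneg by simp
      then have "0 \<in> B" using zX by (simp add: B_def)
      then show False using B0 by simp
    qed
    have mB: "uminus ` B = uminus ` Ct \<inter> X" unfolding B_def by (rule neg_Int_X)
    have Bsym: "uminus ` B = B \<longleftrightarrow> -t \<in> Ct"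
    proof
      assume "uminus ` B = B"
      obtain b where b: "b \<in> B" using Bne by blast
      then have "b \<in> uminus ` Ct" using mB \<open>uminus ` B = B\<close> by blast
      moreover have "b \<in> Ct" using b by (simp add: B_def)
      ultimately have "uminus ` Ct = Ct" using partition_block_unique[OF Pp mCt Ct(1)] by blast
      then show "-t \<in> Ct" using mt by simp
    next
      assume "-t \<in> Ct"
      then have "uminus ` Ct = Ct" by (rule selfneg)
      then show "uminus ` B = B" using mB by (simp add: B_def)
    qed
    have Bsym': "B = uminus ` B \<longleftrightarrow> -t \<in> Ct" using Bsym by auto
    have both: "C \<inter> X \<noteq> {} \<and> C \<inter> {t, -t} = EB t B (C \<inter> X)" if C: "C \<in> P" for C
      proof (cases "C = Ct")
        case True
        have "Ct \<inter> {t, -t} = {t} \<union> (if -t \<in> Ct then {-t} else {})" using Ct(2) by auto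
        then show ?thesis using True Bne Bsym Bsym' by (simp add: B_def[symmetric] EB_def)
      next
        case F1: False
        show ?thesis
        proof (cases "C = uminus ` Ct")
          case True
          have nt: "-t \<notin> Ct" using selfneg F1 True by auto
          then have "uminus ` B \<noteq> B" using Bsym by simp
          have "t \<notin> C" using True nt by (simp add: mem_neg_image)
          then have "C \<inter> {t, -t} = {-t}" using True mt by auto
          moreover have "C \<inter> X = uminus ` B" using True mB by simp
          ultimately show ?thesis using Bne \<open>uminus ` B \<noteq> B\<close> by (auto simp: EB_def)
        next
          case F2: False
          have CX: "C \<subseteq> X" using other[OF C F1 F2] .
          have "C \<noteq> B"
          proof
            assume "C = B"
            obtain b where "b \<in> B" using Bne by blast
            then have "b \<in> C" "b \<in> Ct" using \<open>C = B\<close> by (auto simp: B_def)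
            then show False using partition_block_unique[OF Pp C Ct(1)] F1 by blast
          qed
          moreover have "C \<noteq> uminus ` B"
          proof
            assume "C = uminus ` B"
            obtain b where "b \<in> B" using Bne by blast
            then have "-b \<in> C" "-b \<in> uminus ` Ct" using \<open>C = uminus ` B\<close> by (auto simp: B_def)
            then show False using partition_block_unique[OF Pp C mCt] F2 by blast
          qed
          moreover have "C \<inter> X = C" using CX by blast
          moreover have "C \<inter> {t, -t} = {}" using CX tX mtX by blast
          ultimately show ?thesis using ne[OF C] by (simp add: EB_def)
        qed
      qed
    have "P = gext (EB t B) (resP X P)"
      by (rule gext_surj[OF Pp, where E="EB t B"]) (use both tX mtX in auto)
    moreover have "B \<in> resP X P" using Ct(1) Bne by (auto simp: resP_def B_def)
    ultimately show ?thesis unfolding extB_def by blast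
  qed
qed


lemma PB_sub: "C \<in> Q \<Longrightarrow> Q \<in> PB X \<Longrightarrow> C \<subseteq> X"
  using partition_subset[OF PB_part] by blast

lemma PB_ne: "C \<in> Q \<Longrightarrow> Q \<in> PB X \<Longrightarrow> C \<noteq> {}"
  using partition_nonempty[OF PB_part] by blast

lemma EB_X: "EB t B C \<inter> X = {}" using tX mtX by (auto simp: EB_def)

lemma B_new_notin: "Q \<in> PB X \<Longrightarrow> newB t Q \<notin> extB t Q ` Q"
proof
  assume Q: "Q \<in> PB X" and "newB t Q \<in> extB t Q ` Q"
  then obtain B where "B \<in> Q" "{t} \<in> extB t Q B" by (auto simp: newB_def)
  then obtain C where C: "C \<in> Q" "{t} = C \<union> EB t B C"
    unfolding extB_def gext_def by (rule_tac imageE) auto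
  have "C \<subseteq> X" "C \<noteq> {}" using PB_sub[OF C(1) Q] PB_ne[OF C(1) Q] by auto
  moreover have "C \<subseteq> {t}" using C(2) by blast
  ultimately show False using tX by blast
qed

lemma B_ext_inj: "Q \<in> PB X \<Longrightarrow> inj_on (extB t Q) Q"
proof (rule inj_onI)
  fix B B' assume Q: "Q \<in> PB X" and B: "B \<in> Q" and B': "B' \<in> Q" and eq: "extB t Q B = extB t Q B'"
  have "B \<union> EB t B B \<in> extB t Q B" unfolding extB_def gext_def using B by blast
  then have "B \<union> EB t B B \<in> extB t Q B'" using eq by simp
  then obtain C where C: "C \<in> Q" "B \<union> EB t B B = C \<union> EB t B' C"
    unfolding extB_def gext_def by blast
  have BX: "B \<subseteq> X" "C \<subseteq> X" using PB_sub[OF B Q] PB_sub[OF C(1) Q] by auto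
  have "B = C"
  proof -
    have "(B \<union> EB t B B) \<inter> X = (C \<union> EB t B' C) \<inter> X" using C(2) by simp
    then show ?thesis using BX EB_X[of B B] EB_X[of B' C] by blast
  qed
  moreover have "C = B'"
  proof -
    have "t \<in> B \<union> EB t B B" by (simp add: EB_def)
    then have "t \<in> EB t B' C" using C(2) BX tX by blast
    then show ?thesis using tne by (auto simp: EB_def split: if_splits)
  qed
  ultimately show "B = B'" by simp
qed

lemma B_fiber:
  assumes Q: "Q \<in> PB X"
  shows "{P \<in> PB (X \<union> {t, -t}). resP X P = Q} = insert (newB t Q) (extB t Q ` Q)"
proof (rule set_eqI, rule iffI)
  fix P assume "P \<in> {P \<in> PB (X \<union> {t, -t}). resP X P = Q}"
  then have P: "P \<in> PB (X \<union> {t, -t})" and r: "resP X P = Q" by auto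
  from B_surj[OF P] show "P \<in> insert (newB t Q) (extB t Q ` Q)" unfolding r by blast
next
  fix P assume "P \<in> insert (newB t Q) (extB t Q ` Q)"
  then show "P \<in> {P \<in> PB (X \<union> {t, -t}). resP X P = Q}"
    using B_new[OF Q] B_ext[OF Q] B_res_new[OF Q] B_res_ext[OF Q] by blast
qed

lemma finite_PB: "finite Y \<Longrightarrow> finite (PB Y)"
  by (rule finite_subset[of _ "{P. partition_on Y P}"]) (auto simp: PB_def finitely_many_partition_on)

lemma B_decomp:
  "(\<Sum>P\<in>PB (X \<union> {t, -t}). F P) = (\<Sum>Q\<in>PB X. F (newB t Q) + (\<Sum>B\<in>Q. F (extB t Q B)))"
proof -
  have "(\<Sum>P\<in>PB (X \<union> {t, -t}). F P) = (\<Sum>Q\<in>PB X. \<Sum>P\<in>{P \<in> PB (X \<union> {t, -t}). resP X P = Q}. F P)"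
    by (rule sum.group[symmetric]) (auto simp: finite_PB finX B_res_in)
  also have "\<dots> = (\<Sum>Q\<in>PB X. F (newB t Q) + (\<Sum>B\<in>Q. F (extB t Q B)))"
  proof (rule sum.cong[OF refl])
    fix Q assume Q: "Q \<in> PB X"
    have fin: "finite Q" using finite_elements[OF finX PB_part[OF Q]] .
    show "(\<Sum>P\<in>{P \<in> PB (X \<union> {t, -t}). resP X P = Q}. F P) = F (newB t Q) + (\<Sum>B\<in>Q. F (extB t Q B))"
      unfolding B_fiber[OF Q]
      using B_new_notin[OF Q] fin by (simp add: sum.reindex[OF B_ext_inj[OF Q]])
  qed
  finally show ?thesis .
qed

lemma B_card_new: "Q \<in> PB X \<Longrightarrow> card (newB t Q) = card Q + 2"
proof -
  assume Q: "Q \<in> PB X"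
  have fin: "finite Q" using finite_elements[OF finX PB_part[OF Q]] .
  have "{t} \<notin> Q" using PB_sub[of "{t}" Q] Q tX by blast
  moreover have "{-t} \<notin> Q" using PB_sub[of "{-t}" Q] Q mtX by blast
  ultimately show ?thesis using fin tne by (simp add: newB_def)
qed

lemma B_arcs_new: "arcs (newB t Q) = arcs Q"
  by (simp add: newB_def arcs_Union arcsB_single)

lemma B_card_ext: "Q \<in> PB X \<Longrightarrow> card (extB t Q B) = card Q"
  unfolding extB_def by (rule gext_card[OF PB_part]) (use EB_X[of B] in blast)+

lemma B_arcs_ext:
  assumes Q: "Q \<in> PB X" and B: "B \<in> Q"
  shows "card (arcs (extB t Q B)) = card (arcs Q) + 2"
proof -
  have Qp: "partition_on X Q" using PB_part[OF Q] .
  have finB: "finite B" using PB_sub[OF B Q] finX finite_subset by blast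
  have neB: "B \<noteq> {}" using PB_ne[OF B Q] .
  have mB: "uminus ` B \<in> Q" using PB_cl[OF Q B] .
  have MB: "Max B \<in> X" using Max_in[OF finB neB] PB_sub[OF B Q] by blast
  have one: "arcsB (C \<union> EB t B C) = arcsB C \<union> (if C = B then {(Max B, t)} else {})
      \<union> (if C = uminus ` B then {(-t, - Max B)} else {})" if C: "C \<in> Q" for C
  proof -
    have CX: "C \<subseteq> X" using PB_sub[OF C Q] .
    have finC: "finite C" using CX finX finite_subset by blast
    have neC: "C \<noteq> {}" using PB_ne[OF C Q] .
    have lt: "\<And>c. c \<in> C \<Longrightarrow> c < t" using CX ltX by blast
    have gt: "\<And>c. c \<in> C \<Longrightarrow> -t < c" using CX gtX by blast
    have minC: "C = uminus ` B \<Longrightarrow> Min C = - Max B" using Min_neg_image[OF finB neB] by simp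
    show ?thesis
    proof (cases "C = B")
      case True
      show ?thesis
      proof (cases "C = uminus ` B")
        case T2: True
        have lt': "\<And>c. c \<in> insert (-t) C \<Longrightarrow> c < t" using lt tpos by auto
        have fin': "finite (insert (-t) C)" using finC by simp
        have "-t < Max C" using gt[OF Max_in[OF finC neC]] .
        then have MaxI: "Max (insert (-t) C) = Max C"
          using finC neC by (simp add: max_def)
        have "C \<union> EB t B C = insert t (insert (-t) C)" using True T2 by (auto simp: EB_def)
        then have "arcsB (C \<union> EB t B C) = insert (Max C, t) (insert (-t, Min C) (arcsB C))"
          using arcsB_insert_max[OF fin' _ lt'] arcsB_insert_min[OF finC neC gt] MaxI by simp
        then show ?thesis using True T2 minC by auto
      next
        case F2: False
        have "C \<union> EB t B C = insert t C" using True F2 by (auto simp: EB_def)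
        then show ?thesis using arcsB_insert_max[OF finC neC lt] True F2 by auto
      qed
    next
      case False
      show ?thesis
      proof (cases "C = uminus ` B")
        case T2: True
        have "C \<union> EB t B C = insert (-t) C" using False T2 by (auto simp: EB_def)
        then show ?thesis using arcsB_insert_min[OF finC neC gt] False T2 minC by auto
      next
        case F2: False
        have "C \<union> EB t B C = C" using False F2 by (auto simp: EB_def)
        then show ?thesis using False F2 by simp
      qed
    qed
  qed
  have "arcs (extB t Q B) = (\<Union>C\<in>Q. arcsB (C \<union> EB t B C))"
    unfolding extB_def by (rule arcs_gext)
  also have "\<dots> = (\<Union>C\<in>Q. arcsB C \<union> (if C = B then {(Max B, t)} else {})
      \<union> (if C = uminus ` B then {(-t, - Max B)} else {}))"
    using one by (rule SUP_cong[OF refl])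
  also have "\<dots> = arcs Q \<union> {(Max B, t), (-t, - Max B)}"
    using B mB unfolding arcs_Union by (auto split: if_splits)
  finally have eq: "arcs (extB t Q B) = insert (Max B, t) (insert (-t, - Max B) (arcs Q))" by auto
  have "(Max B, t) \<notin> arcs Q" using arcs_subset[OF Qp] tX by auto
  moreover have "(-t, - Max B) \<notin> arcs Q" using arcs_subset[OF Qp] mtX by auto
  moreover have "(Max B, t) \<noteq> (-t, - Max B)" using MB mtX by auto
  moreover have "finite (arcs Q)" using finite_arcs[OF Qp finX] .
  ultimately show ?thesis using eq by simp
qed

end



lemma XS: "{- int (Suc n)..int (Suc n)} = {- int n..int n} \<union> {int n + 1, - (int n + 1)}"
  by auto

lemma bs: "bsetup {- int n..int n} (int n + 1)"
  by unfold_locales auto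

lemma PiB_Suc: "PiB (Suc n) = PB ({- int n..int n} \<union> {int n + 1, - (int n + 1)})"
  by (simp only: PiB_PB XS)

lemma finite_PiB: "finite (PiB n)"
  unfolding PiB_PB by (rule bsetup.finite_PB[OF bs]) simp

lemma PiB_card:
  assumes "P \<in> PiB n" shows "odd (card P) \<and> card P \<le> 2 * n + 1"
  using assms
proof (induction n arbitrary: P)
  case 0
  have Pp: "partition_on {0} P" using 0 by (simp add: PiB_PB PB_def)
  have "card P \<le> card {0::int}" by (rule card_partition_le[OF Pp]) simp
  moreover have "P \<noteq> {}" using partition_onD1[OF Pp] by auto
  moreover have "finite P" using finite_elements[OF _ Pp] by simp
  ultimately have "card P = 1" by (simp add: le_Suc_eq card_eq_0_iff)
  then show ?case by simp
next
  case (Suc n)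
  interpret bsetup "{- int n..int n}" "int n + 1" by (rule bs)
  have P: "P \<in> PB ({- int n..int n} \<union> {int n + 1, - (int n + 1)})" using Suc.prems PiB_Suc by simp
  have R: "resP {- int n..int n} P \<in> PiB n" using B_res_in[OF P] by (simp add: PiB_PB)
  have odd: "odd (card P)"
  proof -
    have Rb: "resP {- int n..int n} P \<in> PB {- int n..int n}" using R by (simp add: PiB_PB)
    from B_surj[OF P] show ?thesis
    proof
      assume eq: "P = newB (int n + 1) (resP {- int n..int n} P)"
      have "card P = card (newB (int n + 1) (resP {- int n..int n} P))" using eq by (rule arg_cong)
      then show ?thesis using B_card_new[OF Rb] Suc.IH[OF R] by simp
    next
      assume "\<exists>B\<in>resP {- int n..int n} P. P = extB (int n + 1) (resP {- int n..int n} P) B"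
      then obtain B where eq: "P = extB (int n + 1) (resP {- int n..int n} P) B" by blast
      have "card P = card (extB (int n + 1) (resP {- int n..int n} P) B)" using eq by (rule arg_cong)
      then show ?thesis using B_card_ext[OF Rb] Suc.IH[OF R] by simp
    qed
  qed
  have Pp: "partition_on {- int (Suc n)..int (Suc n)} P" using Suc.prems by (simp add: PiB_PB PB_def)
  have "card P \<le> card {- int (Suc n)..int (Suc n)}" by (rule card_partition_le[OF Pp]) simp
  then have "card P \<le> 2 * Suc n + 1" by simp
  then show ?case using odd by simp
qed

definition gB :: "nat \<Rightarrow> 'a::comm_semiring_1 \<Rightarrow> nat \<Rightarrow> 'a" where
  "gB n x i = (\<Sum>P\<in>PiB n. if card P = 2 * i + 1 then x ^ (card (arcs P) div 2) else 0)"

lemma gB_Suc: "gB (Suc n) x i = (case i of 0 \<Rightarrow> 0 | Suc i' \<Rightarrow> gB n x i') + of_nat (2 * i + 1) * x * gB n x i"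
proof -
  interpret bsetup "{- int n..int n}" "int n + 1" by (rule bs)
  let ?F = "\<lambda>P. if card P = 2 * i + 1 then x ^ (card (arcs P) div 2) else 0"
  have "gB (Suc n) x i = (\<Sum>Q\<in>PB {- int n..int n}. ?F (newB (int n + 1) Q) + (\<Sum>B\<in>Q. ?F (extB (int n + 1) Q B)))"
    unfolding gB_def PiB_Suc by (rule B_decomp)
  also have "\<dots> = (\<Sum>Q\<in>PB {- int n..int n}. (if card Q + 2 = 2 * i + 1 then x ^ (card (arcs Q) div 2) else 0)
      + (if card Q = 2 * i + 1 then of_nat (2 * i + 1) * x * x ^ (card (arcs Q) div 2) else 0))"
  proof (rule sum.cong[OF refl])
    fix Q assume Q: "Q \<in> PB {- int n..int n}"
    have "(\<Sum>B\<in>Q. ?F (extB (int n + 1) Q B)) = (\<Sum>B\<in>Q. if card Q = 2 * i + 1 then x * x ^ (card (arcs Q) div 2) else 0)"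
      by (rule sum.cong[OF refl]) (simp add: B_card_ext[OF Q] B_arcs_ext[OF Q])
    also have "\<dots> = (if card Q = 2 * i + 1 then of_nat (2 * i + 1) * x * x ^ (card (arcs Q) div 2) else 0)"
      by (simp add: mult.assoc)
    finally show "?F (newB (int n + 1) Q) + (\<Sum>B\<in>Q. ?F (extB (int n + 1) Q B)) =
      (if card Q + 2 = 2 * i + 1 then x ^ (card (arcs Q) div 2) else 0) + (if card Q = 2 * i + 1 then of_nat (2 * i + 1) * x * x ^ (card (arcs Q) div 2) else 0)"
      by (simp add: B_card_new[OF Q] B_arcs_new)
  qed
  also have "\<dots> = (case i of 0 \<Rightarrow> 0 | Suc i' \<Rightarrow> gB n x i') + of_nat (2 * i + 1) * x * gB n x i"
  proof -
    have "(\<Sum>Q\<in>PB {- int n..int n}. if card Q + 2 = 2 * i + 1 then x ^ (card (arcs Q) div 2) else 0) = (case i of 0 \<Rightarrow> 0 | Suc i' \<Rightarrow> gB n x i')"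
      by (cases i) (simp_all add: gB_def PiB_PB)
    moreover have "(\<Sum>Q\<in>PB {- int n..int n}. if card Q = 2 * i + 1 then of_nat (2 * i + 1) * x * x ^ (card (arcs Q) div 2) else 0) = of_nat (2 * i + 1) * x * gB n x i"
      by (simp add: gB_def PiB_PB sum_distrib_left if_distrib cong: if_cong)
    ultimately show ?thesis by (simp add: sum.distrib)
  qed
  finally show ?thesis .
qed

lemma StirlingB_gB: "StirlingB n i = gB n (1::nat) i"
  by (simp add: StirlingB_def gB_def sum.If_cases finite_PiB Int_def)

lemma StirlingB_0: "StirlingB (Suc n) 0 = StirlingB n 0"
  by (simp add: StirlingB_gB gB_Suc)

lemma StirlingB_S: "StirlingB (Suc n) (Suc i) = (2 * i + 3) * StirlingB n (Suc i) + StirlingB n i"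
  by (simp add: StirlingB_gB gB_Suc algebra_simps)

lemma StirlingB_less: "n < i \<Longrightarrow> StirlingB n i = 0"
proof -
  assume "n < i"
  then have "{P \<in> PiB n. card P = 2 * i + 1} = {}" using PiB_card[of _ n] by fastforce
  then show ?thesis unfolding StirlingB_def by (metis card.empty)
qed

lemma arcs_PiB0: "P \<in> PiB 0 \<Longrightarrow> arcs P = {}"
proof -
  assume "P \<in> PiB 0"
  then have "partition_on {0} P" by (simp add: PiB_PB PB_def)
  then have "arcs P \<subseteq> {0} \<times> {0}" by (rule arcs_subset)
  moreover have "\<And>i j. (i, j) \<in> arcs P \<Longrightarrow> i < j" by (auto simp: arcs_def)
  ultimately show ?thesis by fastforce
qed

lemma gB_closed: "gB n x i = of_nat (StirlingB n i) * x ^ (n - i)"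
proof (induction n arbitrary: i)
  case 0
  have "gB 0 x i = (\<Sum>P\<in>PiB 0. if card P = 2 * i + 1 then 1 else 0)"
    unfolding gB_def by (rule sum.cong[OF refl]) (simp add: arcs_PiB0)
  moreover have "StirlingB 0 i = (\<Sum>P\<in>PiB 0. if card P = 2 * i + 1 then 1 else 0)"
    unfolding StirlingB_gB gB_def by (rule sum.cong[OF refl]) (simp add: arcs_PiB0)
  ultimately show ?case by (simp add: of_nat_sum if_distrib cong: if_cong)
next
  case (Suc n)
  show ?case
  proof (cases i)
    case 0 then show ?thesis by (simp add: gB_Suc Suc.IH StirlingB_0 algebra_simps)
  next
    case (Suc i')
    show ?thesis
    proof (cases "Suc i' \<le> n")
      case True
      then have "n - i' = Suc (n - Suc i')" by simp
      then have xp: "x ^ (n - i') = x * x ^ (n - Suc i')" by simp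
      have "2 * Suc i' + 1 = 2 * i' + 3" by simp
      then have c: "(of_nat (2 * Suc i' + 1) :: 'a) = of_nat (2 * i' + 3)" by (rule arg_cong)
      have "gB (Suc n) x (Suc i') = gB n x i' + of_nat (2 * i' + 3) * x * gB n x (Suc i')"
        by (simp only: gB_Suc nat.case c)
      also have "\<dots> = of_nat (StirlingB n i') * x ^ (n - i') + of_nat (2 * i' + 3) * x * (of_nat (StirlingB n (Suc i')) * x ^ (n - Suc i'))"
        by (simp only: Suc.IH diff_Suc_Suc)
      also have "\<dots> = of_nat (StirlingB (Suc n) (Suc i')) * x ^ (Suc n - Suc i')"
        unfolding StirlingB_S diff_Suc_Suc xp of_nat_add of_nat_mult by (simp only: algebra_simps)
      finally show ?thesis using Suc by simp
    next
      case False
      then have "StirlingB n (Suc i') = 0" by (simp add: StirlingB_less)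
      then show ?thesis using Suc False by (simp add: gB_Suc Suc.IH StirlingB_S)
    qed
  qed
qed

lemma bellB_sum: "bellB n x = (\<Sum>i\<le>n. of_nat (StirlingB n i) * x ^ (n - i))"
proof -
  have "bellB n x = (\<Sum>P\<in>PiB n. \<Sum>i\<le>n. if card P = 2 * i + 1 then x ^ (card (arcs P) div 2) else 0)"
  proof (unfold bellB_def, rule sum.cong[OF refl])
    fix P assume P: "P \<in> PiB n"
    obtain k where k: "card P = 2 * k + 1" using PiB_card[OF P] oddE by blast
    have "k \<le> n" using PiB_card[OF P] k by simp
    have "(\<Sum>i\<le>n. if card P = 2 * i + 1 then x ^ (card (arcs P) div 2) else 0)
        = (\<Sum>i\<le>n. if i = k then x ^ (card (arcs P) div 2) else 0)"
      using k by (intro sum.cong) auto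
    also have "\<dots> = x ^ (card (arcs P) div 2)" using \<open>k \<le> n\<close> by simp
    finally show "x ^ (card (arcs P) div 2) = (\<Sum>i\<le>n. if card P = 2 * i + 1 then x ^ (card (arcs P) div 2) else 0)" by simp
  qed
  also have "\<dots> = (\<Sum>i\<le>n. gB n x i)" unfolding gB_def by (rule sum.swap)
  finally show ?thesis by (simp add: gB_closed)
qed




definition swB :: "'a::comm_ring_1 \<Rightarrow> nat \<Rightarrow> nat \<Rightarrow> 'a" where
  "swB x k l = of_nat (StirlingB k l) * x ^ (k - l)"

lemma swB_0: "swB x (Suc N) 0 = (of_nat (2 * 0 + 1) * x) * swB x N 0"
  by (simp add: swB_def StirlingB_0)

lemma swB_S: "swB x (Suc N) (Suc i) = (of_nat (2 * Suc i + 1) * x) * swB x N (Suc i) + swB x N i"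
proof (cases "Suc i \<le> N")
  case True
  then have "N - i = Suc (N - Suc i)" by simp
  then show ?thesis by (simp add: swB_def StirlingB_S algebra_simps)
next
  case False
  then have "StirlingB N (Suc i) = 0" by (simp add: StirlingB_less)
  then show ?thesis using False by (simp add: swB_def StirlingB_S)
qed

theorem proposition5p3:
  fixes x :: "'a::comm_ring_1" and m n :: nat
  shows "(bellA (m + n) x =
           (\<Sum>j=0..m. \<Sum>k=0..n. x ^ (m + n - j - k) * of_nat j ^ (n - k)
              * of_nat (n choose k) * of_nat (Stirling m j) * bellA k x)) \<and>
         (bellB (m + n) x =
           (\<Sum>j=0..m. \<Sum>k=0..n. x ^ (m + n - j - k) * of_nat (2 * j + 1) ^ (n - k)
              * of_nat (n choose k) * of_nat (StirlingB m j) * bellA k (2 * x)))"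
proof
  let ?e = "\<lambda>j. of_nat j * x"
  have "bellA (m + n) x = (\<Sum>i\<le>m+n. sv x (m + n) i)" by (rule bellA_sv)
  also have "\<dots> = (\<Sum>i\<le>m+n. Rc ?e (sv x m) (sv x) n i)"
    by (rule sum.cong[OF refl], rule Rc_main[where f="\<lambda>l. of_nat l * x" and h="\<lambda>l. of_nat l * x"])
       (auto simp: sv_0 sv_S sv_00 sv_0S algebra_simps simp del: of_nat_0)
  also have "\<dots> = (\<Sum>j\<le>m. \<Sum>k\<le>n. of_nat (n choose k) * ?e j ^ (n - k) * sv x m j * (\<Sum>l\<le>k. sv x k l))"
    by (rule Rc_sum) (auto simp: sv_less)
  also have "\<dots> = (\<Sum>j=0..m. \<Sum>k=0..n. x ^ (m + n - j - k) * of_nat j ^ (n - k)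
              * of_nat (n choose k) * of_nat (Stirling m j) * bellA k x)"
  proof -
    have "of_nat (n choose k) * ?e j ^ (n - k) * sv x m j * (\<Sum>l\<le>k. sv x k l) =
       x ^ (m + n - j - k) * of_nat j ^ (n - k) * of_nat (n choose k) * of_nat (Stirling m j) * bellA k x"
      if "j \<le> m" "k \<le> n" for j k
    proof -
      have "x ^ (m + n - j - k) = x ^ (m - j) * x ^ (n - k)"
        using that by (simp add: power_add[symmetric])
      then show ?thesis by (simp add: bellA_sv sv_def power_mult_distrib mult_ac)
    qed
    then show ?thesis by (simp add: atLeast0AtMost)
  qed
  finally show "bellA (m + n) x = (\<Sum>j=0..m. \<Sum>k=0..n. x ^ (m + n - j - k) * of_nat j ^ (n - k)
              * of_nat (n choose k) * of_nat (Stirling m j) * bellA k x)" .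
next
  let ?e = "\<lambda>j. of_nat (2 * j + 1) * x"
  have "bellB (m + n) x = (\<Sum>i\<le>m+n. swB x (m + n) i)" by (simp add: bellB_sum swB_def)
  also have "\<dots> = (\<Sum>i\<le>m+n. Rc ?e (swB x m) (sv (2 * x)) n i)"
    by (rule sum.cong[OF refl], rule Rc_main[where f="\<lambda>l. of_nat l * (2 * x)" and h="\<lambda>l. of_nat (2 * l + 1) * x"])
       (auto simp: sv_0 sv_S sv_00 sv_0S swB_0 swB_S algebra_simps simp del: of_nat_0)
  also have "\<dots> = (\<Sum>j\<le>m. \<Sum>k\<le>n. of_nat (n choose k) * ?e j ^ (n - k) * swB x m j * (\<Sum>l\<le>k. sv (2 * x) k l))"
    by (rule Rc_sum) (auto simp: sv_less swB_def StirlingB_less)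
  also have "\<dots> = (\<Sum>j=0..m. \<Sum>k=0..n. x ^ (m + n - j - k) * of_nat (2 * j + 1) ^ (n - k)
              * of_nat (n choose k) * of_nat (StirlingB m j) * bellA k (2 * x))"
  proof -
    have "of_nat (n choose k) * ?e j ^ (n - k) * swB x m j * (\<Sum>l\<le>k. sv (2 * x) k l) =
       x ^ (m + n - j - k) * of_nat (2 * j + 1) ^ (n - k) * of_nat (n choose k) * of_nat (StirlingB m j) * bellA k (2 * x)"
      if "j \<le> m" "k \<le> n" for j k
    proof -
      have "x ^ (m + n - j - k) = x ^ (m - j) * x ^ (n - k)"
        using that by (simp add: power_add[symmetric])
      then show ?thesis by (simp add: bellA_sv swB_def power_mult_distrib mult_ac)
    qed
    then show ?thesis by (simp add: atLeast0AtMost)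
  qed
  finally show "bellB (m + n) x = (\<Sum>j=0..m. \<Sum>k=0..n. x ^ (m + n - j - k) * of_nat (2 * j + 1) ^ (n - k)
              * of_nat (n choose k) * of_nat (StirlingB m j) * bellA k (2 * x))" .
qed


end
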